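(* Let $\mathcal{C}$ be a class of hypergraphs that is closed under taking projections. If $\mathcal{C}$ has unbounded dual VC dimension, then for any integer $k$ there exists a hypergraph $\mathcal{H}$ in $\mathcal{C}$ with $2^k-1$ vertices and a test cover of size $k$.
   Context: For a hypergraph $\mathcal{H}=(V,\mathcal{E})$ and $X\subseteq V$, the projection of $\mathcal{H}$ on $X$ is the hypergraph $\mathcal{H}_{|X}$ on vertex set $X$ with hyperedges $\{e\cap X: e\in\mathcal{E}\}$. A set $X$ is shattered if $|\mathcal{H}_{|X}|=2^{|X|}$; the VC dimension is the maximum size of a shattered set. The dual hypergraph $\mathcal{H}^*$ has the hyperedges of $\mathcal{H}$ as vertices and, for each vertex $v$ of $\mathcal{H}$, a hyperedge consisting of the hyperedges containing $v$; the dual VC dimension of $\mathcal{H}$ is the VC dimension of $\mathcal{H}^*$. A test cover of $\mathcal{H}$ is a set of hyperedges such that every vertex lies in one of them and every pair of distinct vertices is separated by one of them (one contains exactly one of the two vertices). *)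

theory Defs
  imports Main
begin

type_synonym 'a hypergraph = "'a set \<times> 'a set set"

definition verts :: "'a hypergraph \<Rightarrow> 'a set" where
  "verts H = fst H"

definition hedges :: "'a hypergraph \<Rightarrow> 'a set set" where
  "hedges H = snd H"

definition hypergraph :: "'a hypergraph \<Rightarrow> bool" where
  "hypergraph H \<longleftrightarrow> finite (verts H) \<and> (\<forall>e\<in>hedges H. e \<subseteq> verts H)"

definition proj :: "'a hypergraph \<Rightarrow> 'a set \<Rightarrow> 'a hypergraph" where
  "proj H X = (X, (\<lambda>e. e \<inter> X) ` hedges H)"

definition shattered :: "'a hypergraph \<Rightarrow> 'a set \<Rightarrow> bool" where
  "shattered H X \<longleftrightarrow> card (hedges (proj H X)) = 2 ^ card X"

definition vc_dim :: "'a hypergraph \<Rightarrow> nat" where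
  "vc_dim H = Max {card X | X. X \<subseteq> verts H \<and> shattered H X}"

definition dual :: "'a hypergraph \<Rightarrow> 'a set hypergraph" where
  "dual H = (hedges H, (\<lambda>v. {e \<in> hedges H. v \<in> e}) ` verts H)"

definition dual_vc_dim :: "'a hypergraph \<Rightarrow> nat" where
  "dual_vc_dim H = vc_dim (dual H)"

definition test_cover :: "'a hypergraph \<Rightarrow> 'a set set \<Rightarrow> bool" where
  "test_cover H T \<longleftrightarrow> T \<subseteq> hedges H
     \<and> (\<forall>v\<in>verts H. \<exists>e\<in>T. v \<in> e)
     \<and> (\<forall>u\<in>verts H. \<forall>v\<in>verts H. u \<noteq> v \<longrightarrow> (\<exists>e\<in>T. (u \<in> e) \<noteq> (v \<in> e)))"

definition closed_under_projections :: "'a hypergraph set \<Rightarrow> bool" where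
  "closed_under_projections C \<longleftrightarrow> (\<forall>H\<in>C. \<forall>X. X \<subseteq> verts H \<longrightarrow> proj H X \<in> C)"

end

theory Submission
  imports Defs
begin

lemma shattered_dual_all:
  assumes H: "hypergraph H" and XS: "X \<subseteq> hedges H" and sh: "shattered (dual H) X"
    and S: "S \<subseteq> X"
  shows "\<exists>v\<in>verts H. {e\<in>X. v \<in> e} = S"
proof -
  have fh: "finite (hedges H)" using H unfolding hypergraph_def
    by (meson Pow_iff finite_Pow_iff rev_finite_subset subsetI)
  have fX: "finite X" using fh XS finite_subset by blast
  let ?B = "hedges (proj (dual H) X)"
  have B: "?B = (\<lambda>v. {e\<in>X. v \<in> e}) ` verts H"
    unfolding proj_def dual_def hedges_def verts_def using XS by (auto simp: hedges_def)
  have sub: "?B \<subseteq> Pow X" unfolding B by auto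
  have "card ?B = card (Pow X)" using sh fX unfolding shattered_def by (simp add: card_Pow)
  hence "?B = Pow X" using sub fX by (simp add: card_subset_eq)
  hence "S \<in> (\<lambda>v. {e\<in>X. v \<in> e}) ` verts H" using S B by auto
  thus ?thesis by auto
qed

theorem proposition2:
  fixes C :: "'a hypergraph set" and k :: nat
  assumes "\<forall>H\<in>C. hypergraph H"
    and "closed_under_projections C"
    and "\<forall>d. \<exists>H\<in>C. dual_vc_dim H \<ge> d"
  shows "\<exists>H\<in>C. card (verts H) = 2 ^ k - 1 \<and> (\<exists>T. test_cover H T \<and> card T = k)"
proof -
  define M :: nat where "M = Max {}"
  obtain H where HC: "H \<in> C" and Hd: "dual_vc_dim H \<ge> Suc M + k" using assms(3) by blast
  have H: "hypergraph H" using HC assms(1) by blast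
  have fh: "finite (hedges H)" using H unfolding hypergraph_def
    by (meson Pow_iff finite_Pow_iff rev_finite_subset subsetI)
  define A where "A = {card X | X. X \<subseteq> hedges H \<and> shattered (dual H) X}"
  have vd: "dual_vc_dim H = Max A"
    unfolding dual_vc_dim_def vc_dim_def A_def by (simp add: dual_def verts_def)
  have "A \<noteq> {}" using Hd vd M_def by auto
  moreover have "finite A"
  proof -
    have "A \<subseteq> {..card (hedges H)}" unfolding A_def using fh card_mono by fastforce
    thus ?thesis using finite_subset by blast
  qed
  ultimately have "Max A \<in> A" by simp
  then obtain X where XS: "X \<subseteq> hedges H" and sh: "shattered (dual H) X" and cX: "card X = Max A"
    unfolding A_def by auto
  have fX: "finite X" using fh XS finite_subset by blast
  have "card X \<ge> k" using cX vd Hd by simp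
  then obtain Y where YX: "Y \<subseteq> X" and cY: "card Y = k" using obtain_subset_with_card_n by metis
  have fY: "finite Y" using fX YX finite_subset by blast
  have ex: "\<exists>v. v \<in> verts H \<and> {e\<in>Y. v \<in> e} = S" if SY0: "S \<subseteq> Y" for S
  proof -
    have "S \<subseteq> X" using SY0 YX by blast
    then obtain v where v: "v \<in> verts H" "{e\<in>X. v \<in> e} = S"
      using shattered_dual_all[OF H XS sh] by blast
    hence "{e\<in>Y. v \<in> e} = S" using SY0 YX by blast
    thus ?thesis using v by blast
  qed
  define f where "f S = (SOME v. v \<in> verts H \<and> {e\<in>Y. v \<in> e} = S)" for S
  have fS: "f S \<in> verts H \<and> {e\<in>Y. f S \<in> e} = S" if "S \<subseteq> Y" for S
    unfolding f_def using someI_ex[OF ex[OF that]] by blast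
  define P where "P = Pow Y - {{}}"
  define W where "W = f ` P"
  have injf: "inj_on f P"
  proof (rule inj_onI)
    fix S S' assume "S \<in> P" "S' \<in> P" "f S = f S'"
    thus "S = S'" using fS unfolding P_def by (metis DiffD1 PowD)
  qed
  have cW: "card W = 2 ^ k - 1"
  proof -
    have "card P = 2 ^ k - 1" unfolding P_def using fY cY by (simp add: card_Pow)
    thus ?thesis unfolding W_def using card_image[OF injf] by simp
  qed
  have WV: "W \<subseteq> verts H" unfolding W_def P_def using fS by blast
  define H' where "H' = proj H W"
  have H'C: "H' \<in> C" using assms(2) HC WV unfolding closed_under_projections_def H'_def by blast
  have vH': "verts H' = W" unfolding H'_def proj_def verts_def by simp
  have eH': "hedges H' = (\<lambda>e. e \<inter> W) ` hedges H" unfolding H'_def proj_def hedges_def by simp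
  define T where "T = (\<lambda>e. e \<inter> W) ` Y"
  have injT: "inj_on (\<lambda>e. e \<inter> W) Y"
  proof (rule inj_onI)
    fix e e' assume e: "e \<in> Y" "e' \<in> Y" "e \<inter> W = e' \<inter> W"
    show "e = e'"
    proof (rule ccontr)
      assume ne: "e \<noteq> e'"
      have "{e} \<in> P" using e unfolding P_def by auto
      hence w: "f {e} \<in> W" unfolding W_def by blast
      have "{x\<in>Y. f {e} \<in> x} = {e}" using fS[of "{e}"] e by auto
      hence "f {e} \<in> e" "f {e} \<notin> e'" using e ne by auto
      hence "f {e} \<in> e \<inter> W" "f {e} \<notin> e' \<inter> W" using w by auto
      thus False using e(3) by simp
    qed
  qed
  have cT: "card T = k" unfolding T_def using card_image[OF injT] cY by simp
  have tc: "test_cover H' T"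
    unfolding test_cover_def
  proof (intro conjI ballI impI)
    show "T \<subseteq> hedges H'" unfolding T_def eH' using YX XS by blast
  next
    fix v assume "v \<in> verts H'"
    then obtain S where S: "S \<in> P" "v = f S" using vH' W_def by auto
    then obtain e where "e \<in> S" unfolding P_def by auto
    moreover have "S \<subseteq> Y" using S unfolding P_def by auto
    ultimately have "e \<in> Y" "v \<in> e" using fS[of S] S by auto
    moreover have "v \<in> W" using S W_def by auto
    ultimately show "\<exists>e\<in>T. v \<in> e" unfolding T_def by blast
  next
    fix u v assume u: "u \<in> verts H'" and v: "v \<in> verts H'" and uv: "u \<noteq> v"
    obtain S where S: "S \<in> P" "u = f S" using u vH' W_def by auto
    obtain S' where S': "S' \<in> P" "v = f S'" using v vH' W_def by auto
    have SY: "S \<subseteq> Y" "S' \<subseteq> Y" using S S' unfolding P_def by auto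
    have "S \<noteq> S'" using uv S S' by auto
    then obtain e where e: "e \<in> Y" "(e \<in> S) \<noteq> (e \<in> S')" using SY by blast
    have "(u \<in> e) = (e \<in> S)" "(v \<in> e) = (e \<in> S')" using fS[OF SY(1)] fS[OF SY(2)] S S' e by auto
    moreover have "u \<in> W" "v \<in> W" using u v vH' by auto
    ultimately have d: "(u \<in> e \<inter> W) \<noteq> (v \<in> e \<inter> W)" using e by simp
    have m: "e \<inter> W \<in> T" unfolding T_def using e by blast
    show "\<exists>e\<in>T. (u \<in> e) \<noteq> (v \<in> e)" using d m by (intro bexI[of _ "e \<inter> W"])
  qed
  have "card (verts H') = 2 ^ k - 1" using vH' cW by simp
  moreover have "\<exists>T. test_cover H' T \<and> card T = k" using tc cT by (intro exI[of _ T]) simp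
  ultimately show ?thesis using H'C by (intro bexI[of _ H']) simp_all
qed

end
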